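(* Let $n$ be a positive integer and $0<\mu\leqq 1$, and set $$\phi(\mu)=\frac{\pi}{2}(\mu+1)-\arctan\frac{\cos\frac{\mu\pi}{2}}{\sin\frac{\mu\pi}{2}+\frac{n\mu}{1-\mu}\left(\frac{1-\mu}{1+\mu}\right)^{\frac{1+\mu}{2}}}.$$ If $p(z)\in\mathcal{H}[1,n]$ satisfies $$|\arg((p(z))^2+zp'(z))|<\phi(\mu)\qquad(z\in\mathbb{U}),$$ then $$|\arg(p(z))|<\frac{\pi}{2}\mu\qquad(z\in\mathbb{U}).$$
   Context: $\mathbb{U}=\{z\in\mathbb{C}:|z|<1\}$ is the open unit disk. For a positive integer $n$, $\mathcal{H}[1,n]$ denotes the class of functions analytic in $\mathbb{U}$ of the form $p(z)=1+\sum_{k=n}^{\infty}a_kz^k$. $\arg$ denotes the principal argument. *)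

theory Defs
  imports "HOL-Complex_Analysis.Complex_Analysis"
begin

definition H1 :: "nat \<Rightarrow> (complex \<Rightarrow> complex) set" where
  "H1 n = {p. p holomorphic_on ball 0 1 \<and>
      (\<exists>a::nat \<Rightarrow> complex. a 0 = 1 \<and> (\<forall>k. 0 < k \<and> k < n \<longrightarrow> a k = 0) \<and>
         (\<forall>z\<in>ball 0 1. (\<lambda>k. a k * z ^ k) sums p z))}"

definition phi :: "nat \<Rightarrow> real \<Rightarrow> real" where
  "phi n \<mu> = pi / 2 * (\<mu> + 1) -
     arctan (cos (\<mu> * pi / 2) /
       (sin (\<mu> * pi / 2) + real n * \<mu> / (1 - \<mu>) * ((1 - \<mu>) / (1 + \<mu>)) powr ((1 + \<mu>) / 2)))"

end

theory Submission
  imports Defs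
begin

lemma amgm_aux:
  fixes \<mu> A :: real
  assumes "0 < \<mu>" "\<mu> < 1" "0 < A"
  shows "2 / (1 - \<mu>) * ((1 - \<mu>) / (1 + \<mu>)) powr ((1 + \<mu>) / 2)
         \<le> (A\<^sup>2 + 1) / A powr (1 + \<mu>)"
proof -
  define al where "al = (1 + \<mu>) / 2"
  define be where "be = (1 - \<mu>) / 2"
  define a where "a = A powr (1 - \<mu>) / al"
  define b where "b = A powr (-1 - \<mu>) / be"
  have al: "0 < al" and be: "0 < be" and ab1: "al + be = 1" using assms by (auto simp: al_def be_def field_simps)
  have a: "0 < a" and b: "0 < b" using assms al be by (auto simp: a_def b_def)
  have Y: "a powr al * b powr be \<le> al * a + be * b"
    using Youngs_inequality_0[of al be a b] al be ab1 a b by auto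
  have R: "al * a + be * b = (A\<^sup>2 + 1) / A powr (1 + \<mu>)"
  proof -
    have "al * a + be * b = A powr (1 - \<mu>) + A powr (-1 - \<mu>)"
      using al be by (simp add: a_def b_def)
    also have "\<dots> = (A powr 2 + 1) / A powr (1 + \<mu>)"
    proof -
      have "A powr (1 - \<mu>) = A powr 2 / A powr (1 + \<mu>)"
        using powr_diff[of A 2 "1+\<mu>"] by simp
      moreover have "A powr (-1 - \<mu>) = 1 / A powr (1 + \<mu>)"
        using powr_minus[of A "1+\<mu>"] by (simp add: divide_inverse)
      ultimately show ?thesis by (simp add: add_divide_distrib)
    qed
    finally show ?thesis using assms by (simp add: powr_numeral power2_eq_square)
  qed
  have L: "a powr al * b powr be = 2 / (1 - \<mu>) * ((1 - \<mu>) / (1 + \<mu>)) powr ((1 + \<mu>) / 2)"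
  proof -
    have "a powr al = A powr ((1 - \<mu>) * al) / al powr al"
      using al assms by (simp add: a_def powr_divide powr_powr)
    moreover have "b powr be = A powr ((-1 - \<mu>) * be) / be powr be"
      using be assms by (simp add: b_def powr_divide powr_powr)
    moreover have "(1 - \<mu>) * al + (-1 - \<mu>) * be = 0" by (simp add: al_def be_def field_simps)
    ultimately have "a powr al * b powr be = 1 / (al powr al * be powr be)"
      using assms by (simp add: powr_add[symmetric] field_simps)
    also have "\<dots> = 2 / (1 - \<mu>) * ((1 - \<mu>) / (1 + \<mu>)) powr ((1 + \<mu>) / 2)"
    proof -
      have e1: "al powr al = (1+\<mu>) powr al / 2 powr al" using assms by (simp add: al_def powr_divide)
      have e2: "be powr be = (1-\<mu>) powr be / 2 powr be" using assms by (simp add: be_def powr_divide)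
      have e3: "2 powr al * 2 powr be = 2" using ab1 by (simp add: powr_add[symmetric])
      have e4: "((1 - \<mu>) / (1 + \<mu>)) powr al = (1-\<mu>) powr al / (1+\<mu>) powr al"
        using assms by (simp add: powr_divide)
      have e5: "(1-\<mu>) powr al = (1-\<mu>) * (1-\<mu>) powr (- be)"
      proof -
        have "al = 1 + (- be)" using ab1 by simp
        moreover have "(1-\<mu>) powr (1 + (-be)) = (1-\<mu>) powr 1 * (1-\<mu>) powr (-be)" by (rule powr_add)
        ultimately show ?thesis using assms by simp
      qed
      have p1: "(1+\<mu>) powr al > 0" "(1-\<mu>) powr be > 0" "2 powr al > 0" "2 powr be > 0"
        using assms by auto
      have "al powr al * be powr be = (1+\<mu>) powr al * (1-\<mu>) powr be / (2 powr al * 2 powr be)"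
        using e1 e2 by simp
      also have "\<dots> = (1+\<mu>) powr al * (1-\<mu>) powr be / 2" using e3 by simp
      finally have l0: "al powr al * be powr be = (1+\<mu>) powr al * (1-\<mu>) powr be / 2" .
      have l: "1 / (al powr al * be powr be) = 2 / ((1+\<mu>) powr al * (1-\<mu>) powr be)"
        unfolding l0 by simp
      have "((1 - \<mu>) / (1 + \<mu>)) powr ((1 + \<mu>) / 2) = (1-\<mu>) * (1-\<mu>) powr (- be) / (1+\<mu>) powr al"
        using e4 e5 by (simp add: al_def)
      also have "\<dots> = (1-\<mu>) / ((1-\<mu>) powr be * (1+\<mu>) powr al)"
        by (simp add: powr_minus divide_inverse)
      finally have r: "2 / (1 - \<mu>) * ((1 - \<mu>) / (1 + \<mu>)) powr ((1 + \<mu>) / 2) = 2 / ((1+\<mu>) powr al * (1-\<mu>) powr be)"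
        using assms by (simp add: field_simps)
      show ?thesis using l r by simp
    qed
    finally show ?thesis .
  qed
  show ?thesis using Y R L by simp
qed

lemma jack:
  fixes g h :: "complex \<Rightarrow> complex" and U :: "complex set" and r :: real and z0 :: complex
  assumes U: "open U" "ball 0 r \<subseteq> U" "z0 \<in> U" and r: "0 < r" "norm z0 = r"
    and holg: "g holomorphic_on U" and holh: "h holomorphic_on U"
    and fac: "\<forall>z\<in>U. g z = z^n * h z"
    and lt: "\<forall>z\<in>ball 0 r. norm (g z) < 1" and eq: "norm (g z0) = 1"
  shows "\<exists>m::real. m \<ge> n \<and> z0 * deriv g z0 = of_real m * g z0"
proof -
  have hb: "norm (h z) * r^n \<le> 1" if z: "z \<in> ball 0 r" for z
  proof -
    have s: "norm (h z) * s^n \<le> 1" if s: "norm z < s" "s < r" for s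
    proof -
      have s0: "0 < s" using s norm_ge_zero[of z] by linarith
      have cb: "cball 0 s \<subseteq> U" using U(2) s by auto
      have h1: "h holomorphic_on interior (cball 0 s)"
        using holh cb ball_subset_cball by (metis interior_cball holomorphic_on_subset subset_trans)
      have h2: "continuous_on (closure (cball 0 s)) h"
        using holh cb by (auto intro: holomorphic_on_imp_continuous_on holomorphic_on_subset)
      have h3: "norm (h w) \<le> 1 / s^n" if "w \<in> frontier (cball (0::complex) s)" for w
      proof -
        have w: "norm w = s" using s0 that by (simp add: frontier_cball)
        then have wU: "w \<in> U" "w \<in> ball 0 r" using cb s by auto
        have "norm (g w) = s^n * norm (h w)" using fac wU w by (simp add: norm_mult norm_power)
        moreover have "norm (g w) < 1" using lt wU by auto
        ultimately show "norm (h w) \<le> 1 / s^n" using s0 by (simp add: field_simps)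
      qed
      have "norm (h z) \<le> 1 / s^n"
        using maximum_modulus_frontier[OF h1 h2 _ h3, of z] s by simp
      then show ?thesis using s0 by (simp add: field_simps)
    qed
    have "((\<lambda>s. norm (h z) * s^n) \<longlongrightarrow> norm (h z) * r^n) (at_left r)"
      by (intro tendsto_intros)
    moreover have "\<forall>\<^sub>F s in at_left r. norm (h z) * s^n \<le> 1"
    proof -
      have "norm z < r" using z by simp
      then show ?thesis
        unfolding eventually_at_left_field using s by blast
    qed
    ultimately show ?thesis
      by (rule tendsto_upperbound) simp
  qed
  have gt: "norm (g (of_real t * z0)) \<le> t^n" if t: "0 < t" "t < 1" for t
  proof -
    have tz: "of_real t * z0 \<in> ball 0 r" using t r by (simp add: norm_mult)
    then have "of_real t * z0 \<in> U" using U(2) by auto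
    then have "g (of_real t * z0) = (of_real t * z0)^n * h (of_real t * z0)" using fac by auto
    then have "norm (g (of_real t * z0)) = t^n * (r^n * norm (h (of_real t * z0)))"
      using t r by (simp add: norm_mult norm_power power_mult_distrib)
    also have "\<dots> \<le> t^n * 1" using hb[OF tz] t by (intro mult_left_mono) (auto simp: mult.commute)
    finally show ?thesis by simp
  qed
  have cl: "norm (g w) \<le> 1" if w: "w \<in> U" "norm w = r" for w
  proof -
    have "isCont g w" using holg U(1) w(1)
      using continuous_on_eq_continuous_at[of U g] holomorphic_on_imp_continuous_on by blast
    moreover have "((\<lambda>t. of_real t * w) \<longlongrightarrow> of_real 1 * w) (at_left (1::real))"
      by (intro tendsto_intros)
    then have "((\<lambda>t. of_real t * w) \<longlongrightarrow> w) (at_left (1::real))" by simp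
    ultimately have "((\<lambda>t. g (of_real t * w)) \<longlongrightarrow> g w) (at_left 1)"
      by (rule isCont_tendsto_compose)
    then have "((\<lambda>t. norm (g (of_real t * w))) \<longlongrightarrow> norm (g w)) (at_left 1)"
      by (auto intro: tendsto_norm)
    moreover have "\<forall>\<^sub>F t in at_left 1. norm (g (of_real t * w)) \<le> 1"
    proof -
      have "\<forall>t>0. t < 1 \<longrightarrow> norm (g (of_real t * w)) \<le> 1"
      proof (intro allI impI)
        fix t :: real assume "0 < t" "t < 1"
        then have "of_real t * w \<in> ball 0 r" using w r by (simp add: norm_mult)
        then show "norm (g (of_real t * w)) \<le> 1" using lt by fastforce
      qed
      then show ?thesis unfolding eventually_at_left_field by (intro exI[of _ 0]) auto
    qed
    ultimately show ?thesis by (rule tendsto_upperbound) simp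
  qed
  define c where "c = cnj (g z0)"
  have cg: "c * g z0 = 1"
    using complex_norm_square[of "g z0"] eq by (simp add: c_def mult.commute)
  define D where "D = c * deriv g z0 * z0"
  have dg: "\<And>w. w \<in> U \<Longrightarrow> (g has_field_derivative deriv g w) (at w)"
    using holg U(1) by (auto intro: holomorphic_derivI)
  have ImD: "Im D = 0"
  proof -
    define F where "F = (\<lambda>\<theta>::complex. c * g (z0 * exp (\<i> * \<theta>)))"
    have dE: "((\<lambda>\<theta>::complex. z0 * exp (\<i> * \<theta>)) has_field_derivative z0 * \<i>) (at 0)"
      by (auto intro!: derivative_eq_intros)
    have "(F has_field_derivative c * (deriv g z0 * (z0 * \<i>))) (at (of_real 0))"
    proof -
      have dg0: "(g has_field_derivative deriv g z0) (at (z0 * exp (\<i> * 0)))" using dg U(3) by simp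
      show ?thesis unfolding F_def using DERIV_cmult[OF DERIV_chain2[OF dg0 dE], of c] by simp
    qed
    then have "((\<lambda>x. F (of_real x)) has_vector_derivative c * (deriv g z0 * (z0 * \<i>))) (at 0)"
      by (rule has_vector_derivative_real_field)
    then have der: "((\<lambda>x. Re (F (of_real x))) has_real_derivative Re (c * (deriv g z0 * (z0 * \<i>)))) (at 0)"
      by (rule has_field_derivative_Re)
    obtain e where e: "e > 0" "ball z0 e \<subseteq> U" using U(1,3) open_contains_ball by blast
    have "isCont (\<lambda>y::real. z0 * exp (\<i> * of_real y)) 0" by (intro continuous_intros)
    then have "(\<lambda>y::real. z0 * exp (\<i> * of_real y)) \<midarrow>0\<rightarrow> z0" by (simp add: isCont_def)
    from LIM_D[OF this e(1)] obtain d where d: "d > 0"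
      "\<forall>y::real. y \<noteq> 0 \<and> norm (y - 0) < d \<longrightarrow> norm (z0 * exp (\<i> * of_real y) - z0) < e" by blast
    have "Re (c * (deriv g z0 * (z0 * \<i>))) = 0"
    proof (rule DERIV_local_max[OF der d(1)])
      show "\<forall>y. \<bar>0 - y\<bar> < d \<longrightarrow> Re (F (of_real y)) \<le> Re (F (of_real 0))"
      proof (intro allI impI)
        fix y :: real assume y: "\<bar>0 - y\<bar> < d"
        have inU: "z0 * exp (\<i> * of_real y) \<in> U"
        proof (cases "y = 0")
          case True then show ?thesis using U by simp
        next
          case False
          then have "norm (z0 * exp (\<i> * of_real y) - z0) < e" using d y by auto
          then show ?thesis using e(2) by (auto simp: dist_norm norm_minus_commute)
        qed
        have nr: "norm (z0 * exp (\<i> * of_real y)) = r" using r by (simp add: norm_mult)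
        have "Re (F (of_real y)) \<le> norm (F (of_real y))" by (rule complex_Re_le_cmod)
        also have "\<dots> = norm (g (z0 * exp (\<i> * of_real y)))"
          using eq by (simp add: F_def norm_mult c_def)
        also have "\<dots> \<le> 1" using cl[OF inU nr] .
        also have "1 = Re (F (of_real 0))" using cg by (simp add: F_def)
        finally show "Re (F (of_real y)) \<le> Re (F (of_real 0))" .
      qed
    qed
    then show ?thesis by (simp add: D_def algebra_simps)
  qed
  have ReD: "Re D \<ge> n"
  proof -
    define F where "F = (\<lambda>\<zeta>::complex. c * g (\<zeta> * z0))"
    have dM: "((\<lambda>\<zeta>::complex. \<zeta> * z0) has_field_derivative z0) (at 1)"
      by (auto intro!: derivative_eq_intros)
    have "(F has_field_derivative c * (deriv g z0 * z0)) (at (of_real 1))"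
    proof -
      have dg0: "(g has_field_derivative deriv g z0) (at (1 * z0))" using dg U(3) by simp
      show ?thesis unfolding F_def using DERIV_cmult[OF DERIV_chain2[OF dg0 dM], of c] by simp
    qed
    then have "((\<lambda>x. F (of_real x)) has_vector_derivative c * (deriv g z0 * z0)) (at 1)"
      by (rule has_vector_derivative_real_field)
    then have der: "((\<lambda>x. Re (F (of_real x))) has_real_derivative Re D) (at 1)"
      using has_field_derivative_Re by (fastforce simp: D_def mult.assoc)
    have F1: "Re (F (of_real 1)) = 1" using cg by (simp add: F_def)
    have lim: "((\<lambda>t. (Re (F (of_real t)) - Re (F (of_real 1))) / (t - 1)) \<longlongrightarrow> Re D) (at_left 1)"
      using der unfolding has_field_derivative_iff
      by (rule tendsto_mono[rotated]) (simp add: at_le)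
    have lim2: "((\<lambda>t::real. \<Sum>i<n. t^i) \<longlongrightarrow> (\<Sum>i<n. 1^i)) (at_left 1)"
      by (intro tendsto_intros)
    have ev: "\<forall>\<^sub>F t in at_left 1. (\<Sum>i<n. t^i) \<le> (Re (F (of_real t)) - Re (F (of_real 1))) / (t - 1)"
    proof -
      have "\<forall>t>0. t < 1 \<longrightarrow> (\<Sum>i<n. t^i) \<le> (Re (F (of_real t)) - Re (F (of_real 1))) / (t - 1)"
      proof (intro allI impI)
        fix t :: real assume t: "0 < t" "t < 1"
        have "Re (F (of_real t)) \<le> norm (F (of_real t))" by (rule complex_Re_le_cmod)
        also have "\<dots> = norm (g (of_real t * z0))" using eq by (simp add: F_def norm_mult c_def)
        also have "\<dots> \<le> t^n" using gt[OF t] .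
        finally have le: "Re (F (of_real t)) \<le> t^n" .
        have "1 - t^n = (1 - t) * (\<Sum>i<n. t^i)" by (rule one_diff_power_eq)
        then have "(\<Sum>i<n. t^i) = (1 - t^n) / (1 - t)" using t by simp
        also have "\<dots> \<le> (1 - Re (F (of_real t))) / (1 - t)"
          using le t by (intro divide_right_mono) auto
        also have "\<dots> = (Re (F (of_real t)) - Re (F (of_real 1))) / (t - 1)"
          using F1 t by (simp add: field_simps)
        finally show "(\<Sum>i<n. t^i) \<le> (Re (F (of_real t)) - Re (F (of_real 1))) / (t - 1)" .
      qed
      then show ?thesis unfolding eventually_at_left_field by (intro exI[of _ 0]) auto
    qed
    have "(\<Sum>i<n. (1::real)^i) \<le> Re D"
      by (rule tendsto_le[OF _ lim lim2 ev]) simp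
    then show ?thesis by simp
  qed
  have "z0 * deriv g z0 = D * g z0"
    using cg by (simp add: D_def algebra_simps)
  moreover have "D = of_real (Re D)" using ImD by (simp add: complex_eq_iff)
  ultimately show ?thesis using ReD by (intro exI[of _ "Re D"]) simp
qed

lemma Arg_ii: "Arg \<i> = pi / 2"
proof (rule Arg_unique[of 1])
  show "complex_of_real 1 * exp (\<i> * complex_of_real (pi / 2)) = \<i>"
    by (simp add: exp_eq_polar complex_eq_iff)
qed auto

lemma arg_good:
  assumes "w \<noteq> 0"
  shows "sin b * Re w - \<bar>Im w\<bar> * cos b = norm w * sin (b - \<bar>Arg w\<bar>)"
proof -
  define t where "t = Arg w"
  have w: "w = of_real (norm w) * exp (\<i> * of_real t)" using Arg_eq[OF assms] by (simp add: t_def)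
  have re: "Re w = norm w * cos t" and im: "Im w = norm w * sin t"
    using arg_cong[OF w, of Re] arg_cong[OF w, of Im] by (simp_all add: Re_exp Im_exp)
  have tb: "-pi < t" "t \<le> pi" using mpi_less_Arg Arg_le_pi by (auto simp: t_def)
  have s: "\<bar>sin t\<bar> = sin \<bar>t\<bar>"
  proof (cases "t \<ge> 0")
    case True then show ?thesis using sin_ge_zero[of t] tb by simp
  next
    case False then show ?thesis using sin_ge_zero[of "-t"] tb by simp
  qed
  have c: "cos t = cos \<bar>t\<bar>" by (simp add: abs_if)
  have "\<bar>Im w\<bar> = norm w * sin \<bar>t\<bar>" unfolding im abs_mult s by simp
  then have "sin b * Re w - \<bar>Im w\<bar> * cos b = norm w * (sin b * cos \<bar>t\<bar> - cos b * sin \<bar>t\<bar>)"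
    unfolding re c by (simp only: algebra_simps)
  then show ?thesis by (simp only: sin_diff t_def)
qed

lemma sin_sign:
  assumes "0 < b" "b \<le> pi/2" "-pi < t" "t \<le> pi"
  shows "(sin (b - \<bar>t\<bar>) > 0 \<longleftrightarrow> \<bar>t\<bar> < b)" "(sin (b - \<bar>t\<bar>) = 0 \<longleftrightarrow> \<bar>t\<bar> = b)"
proof -
  have pos: "sin (b - \<bar>t\<bar>) > 0" if "\<bar>t\<bar> < b"
    using that assms by (intro sin_gt_zero) auto
  have neg: "sin (b - \<bar>t\<bar>) < 0" if "\<bar>t\<bar> > b"
  proof -
    have "sin (\<bar>t\<bar> - b) > 0" using that assms by (intro sin_gt_zero) auto
    then show ?thesis using sin_minus[of "\<bar>t\<bar> - b"] by simp
  qed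
  have z: "\<bar>t\<bar> = b \<Longrightarrow> sin (b - \<bar>t\<bar>) = 0" by simp
  show "(sin (b - \<bar>t\<bar>) > 0 \<longleftrightarrow> \<bar>t\<bar> < b)"
    by (rule linorder_cases[of "\<bar>t\<bar>" b]) (use pos neg z in auto)
  show "(sin (b - \<bar>t\<bar>) = 0 \<longleftrightarrow> \<bar>t\<bar> = b)"
    by (rule linorder_cases[of "\<bar>t\<bar>" b]) (use pos neg z in auto)
qed

lemma norm_m1_p1:
  fixes w :: complex
  shows "Re w > 0 \<Longrightarrow> norm (w - 1) < norm (w + 1)"
    and "Re w = 0 \<Longrightarrow> norm (w - 1) = norm (w + 1)"
proof -
  have e: "norm (w - 1)^2 = (Re w - 1)^2 + Im w ^2" "norm (w + 1)^2 = (Re w + 1)^2 + Im w ^2"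
    by (simp_all add: cmod_power2)
  show "Re w > 0 \<Longrightarrow> norm (w - 1) < norm (w + 1)"
  proof -
    assume "Re w > 0"
    then have "norm (w - 1)^2 < norm (w + 1)^2" unfolding e by (simp add: power2_eq_square algebra_simps)
    then show ?thesis by (rule power2_less_imp_less) simp
  qed
  show "Re w = 0 \<Longrightarrow> norm (w - 1) = norm (w + 1)"
  proof -
    assume "Re w = 0"
    then have "norm (w - 1)^2 = norm (w + 1)^2" unfolding e by simp
    then show ?thesis by (simp add: power2_eq_iff_nonneg)
  qed
qed

lemma key_arg:
  fixes \<rho> b Kp :: real
  assumes b: "0 < b" "b \<le> pi/2" and \<rho>: "0 < \<rho>" and K: "0 \<le> Kp"
  shows "Arg (of_real \<rho> * exp (\<i> * of_real b) * (of_real \<rho> * exp (\<i> * of_real b) + \<i> * of_real Kp))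
          = b + pi/2 - arctan (\<rho> * cos b / (\<rho> * sin b + Kp))"
proof -
  define X where "X = \<rho> * cos b"
  define Y where "Y = \<rho> * sin b + Kp"
  have X: "X \<ge> 0" using b \<rho> cos_ge_zero[of b] by (simp add: X_def)
  have Y: "Y > 0" using b \<rho> K sin_gt_zero[of b] by (simp add: Y_def add_pos_nonneg)
  have e1: "of_real \<rho> * exp (\<i> * of_real b) + \<i> * of_real Kp = \<i> * Complex Y (-X)"
    by (simp add: complex_eq_iff X_def Y_def Re_exp Im_exp)
  have a1: "Arg (Complex Y (-X)) = arctan (- X / Y)"
    using Y by (subst arg_conv_arctan) auto
  have at: "arctan (- X / Y) = - arctan (X / Y)" by (simp add: arctan_minus)
  have at0: "0 \<le> arctan (X / Y)" using X Y arctan_monotone'[of 0 "X/Y"] by simp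
  have atb: "arctan (X / Y) < pi/2" using arctan[of "X/Y"] by simp
  have nz: "Complex Y (-X) \<noteq> 0" using Y by (simp add: complex_eq_iff)
  have a2: "Arg (\<i> * Complex Y (-X)) = pi/2 - arctan (X / Y)"
  proof -
    have "-pi < pi/2 - arctan(X/Y) \<and> pi/2 - arctan(X/Y) \<le> pi" using arctan[of "X/Y"] pi_gt_zero by linarith
    then show ?thesis using Arg_times[of \<i> "Complex Y (-X)"] nz a1 at by (simp add: Arg_ii)
  qed
  have a3: "Arg (of_real \<rho> * exp (\<i> * of_real b)) = b"
    using b \<rho> by (intro Arg_unique[of \<rho>]) auto
  have nz2: "of_real \<rho> * exp (\<i> * of_real b) \<noteq> 0" using \<rho> by simp
  have nz3: "\<i> * Complex Y (-X) \<noteq> 0" using nz by simp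
  have "Arg (of_real \<rho> * exp (\<i> * of_real b) * (\<i> * Complex Y (-X))) = b + (pi/2 - arctan (X / Y))"
    using Arg_times[OF _ nz2 nz3] a2 a3 b at0 atb by simp
  then show ?thesis unfolding e1 by (simp add: X_def Y_def)
qed

lemma final_T:
  fixes \<sigma> \<rho> A m \<mu> b :: real and P0 Q :: complex
  assumes \<sigma>: "\<sigma> = 1 \<or> \<sigma> = -1" and \<rho>: "\<rho> > 0" and A: "A > 0" and m: "m \<ge> 0" and \<mu>: "\<mu> > 0"
    and b: "0 < b" "b \<le> pi/2"
    and P0: "P0 = of_real \<rho> * exp (\<i> * of_real (\<sigma> * b))" and Q: "Q = \<i> * of_real (\<sigma> * A)"
  shows "\<bar>Arg (P0^2 + of_real \<mu> * P0 * of_real m * (Q^2 - 1) / (2 * Q))\<bar>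
         = b + pi/2 - arctan (\<rho> * cos b / (\<rho> * sin b + \<mu> * m * (A^2 + 1) / (2 * A)))"
proof -
  define Kp where "Kp = \<mu> * m * (A^2 + 1) / (2 * A)"
  have Kp: "Kp \<ge> 0" using \<mu> m A by (simp add: Kp_def)
  have s2: "\<sigma> * \<sigma> = 1" using \<sigma> by auto
  have Qnz: "Q \<noteq> 0" using Q A \<sigma> by auto
  have q1: "(Q^2 - 1) / (2 * Q) = \<i> * of_real \<sigma> * of_real ((A^2 + 1) / (2 * A))"
  proof -
    have e: "Q^2 - 1 = (\<i> * of_real \<sigma> * of_real ((A^2 + 1) / (2 * A))) * (2 * Q)"
    proof -
      have "Q^2 = - of_real (\<sigma> * \<sigma> * A^2)" unfolding Q by (simp add: power2_eq_square algebra_simps)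
      then have "Q^2 = - of_real (A^2)" using s2 by simp
      moreover have "(\<i> * of_real \<sigma> * of_real ((A^2 + 1) / (2 * A))) * (2 * Q) = - of_real (\<sigma> * \<sigma> * (A^2 + 1))"
        unfolding Q using A by (simp add: field_simps power2_eq_square)
      ultimately show ?thesis using s2 by simp
    qed
    show ?thesis by (subst e) (simp add: Qnz mult.commute mult.left_commute)
  qed
  have T: "P0^2 + of_real \<mu> * P0 * of_real m * (Q^2 - 1) / (2 * Q) = P0 * (P0 + \<i> * of_real \<sigma> * of_real Kp)"
  proof -
    have "of_real \<mu> * P0 * of_real m * (Q^2 - 1) / (2 * Q) = of_real \<mu> * P0 * of_real m * ((Q^2 - 1) / (2 * Q))"
      by simp
    also have "\<dots> = P0 * (\<i> * of_real \<sigma> * of_real Kp)"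
      unfolding q1 Kp_def by (simp add: algebra_simps)
    finally show ?thesis by (simp add: power2_eq_square algebra_simps)
  qed
  define Tp where "Tp = of_real \<rho> * exp (\<i> * of_real b) * (of_real \<rho> * exp (\<i> * of_real b) + \<i> * of_real Kp)"
  have key: "Arg Tp = b + pi/2 - arctan (\<rho> * cos b / (\<rho> * sin b + Kp))"
    unfolding Tp_def by (rule key_arg[OF b \<rho> Kp])
  have pos: "Arg Tp \<ge> 0"
  proof -
    have "arctan (\<rho> * cos b / (\<rho> * sin b + Kp)) < pi/2" using arctan by blast
    then show ?thesis using key b by linarith
  qed
  show ?thesis
  proof (cases "\<sigma> = 1")
    case True
    then have "P0 * (P0 + \<i> * of_real \<sigma> * of_real Kp) = Tp" unfolding Tp_def P0 by simp
    then show ?thesis using T key pos by (simp add: Kp_def)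
  next
    case False
    then have s: "\<sigma> = -1" using \<sigma> by auto
    have "cnj (exp (\<i> * of_real b)) = exp (\<i> * of_real (- b))"
      by (simp add: exp_cnj)
    then have "P0 * (P0 + \<i> * of_real \<sigma> * of_real Kp) = cnj Tp" unfolding Tp_def P0 s by simp
    then have "\<bar>Arg (P0 * (P0 + \<i> * of_real \<sigma> * of_real Kp))\<bar> = \<bar>Arg Tp\<bar>"
      by (simp add: Arg_cnj)
    then show ?thesis using T key pos by (simp add: Kp_def)
  qed
qed

lemma kmin_le:
  fixes \<mu> A m \<rho> :: real and n :: nat
  assumes "0 < \<mu>" "\<mu> \<le> 1" "0 < A" "m \<ge> n" "\<rho> = A powr \<mu>"
  shows "\<rho> * (real n * \<mu> / (1 - \<mu>) * ((1 - \<mu>) / (1 + \<mu>)) powr ((1 + \<mu>) / 2)) \<le> \<mu> * m * (A^2 + 1) / (2 * A)"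
proof (cases "\<mu> = 1")
  case True
  have "0 \<le> \<mu> * m * (A^2 + 1) / (2 * A)" using assms by (intro divide_nonneg_pos mult_nonneg_nonneg) auto
  then show ?thesis using True by simp
next
  case False
  then have \<mu>1: "\<mu> < 1" using assms by simp
  define Q where "Q = ((1 - \<mu>) / (1 + \<mu>)) powr ((1 + \<mu>) / 2)"
  have am: "2 / (1 - \<mu>) * Q \<le> (A\<^sup>2 + 1) / A powr (1 + \<mu>)"
    unfolding Q_def by (rule amgm_aux[OF assms(1) \<mu>1 assms(3)])
  have r0: "\<rho> > 0" using assms by simp
  have "\<rho> * (real n * \<mu> / (1 - \<mu>) * Q) = \<rho> * (real n * \<mu> / 2) * (2 / (1 - \<mu>) * Q)"
    using \<mu>1 by (simp add: field_simps)
  also have "\<dots> \<le> \<rho> * (real n * \<mu> / 2) * ((A\<^sup>2 + 1) / A powr (1 + \<mu>))"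
    using am r0 assms by (intro mult_left_mono) auto
  also have "\<dots> = real n * \<mu> * (A\<^sup>2 + 1) / (2 * A)"
  proof -
    have "A powr (1 + \<mu>) = A * A powr \<mu>" using assms(3) by (simp add: powr_add)
    then show ?thesis using assms r0 by (simp add: field_simps)
  qed
  also have "\<dots> \<le> \<mu> * m * (A^2 + 1) / (2 * A)"
    using assms by (intro divide_right_mono mult_right_mono) (auto simp: mult.commute)
  finally show ?thesis unfolding Q_def .
qed

lemma ratio_le:
  fixes c s Kmin \<rho> Kp :: real
  assumes "c \<ge> 0" "s > 0" "Kmin \<ge> 0" "\<rho> > 0" "Kp \<ge> 0" "\<rho> * Kmin \<le> Kp"
  shows "\<rho> * c / (\<rho> * s + Kp) \<le> c / (s + Kmin)"
proof -
  have d1: "\<rho> * s + Kp > 0" using assms by (simp add: add_pos_nonneg)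
  have d2: "s + Kmin > 0" using assms by simp
  have "c * (\<rho> * Kmin) \<le> c * Kp" using assms by (intro mult_left_mono) auto
  then have "\<rho> * c * (s + Kmin) \<le> c * (\<rho> * s + Kp)" by (simp add: algebra_simps)
  then show ?thesis using d1 d2 by (simp add: divide_le_eq le_divide_eq mult.commute)
qed

lemma alg:
  fixes z D Q P mu M :: complex
  assumes Q: "Q \<noteq> 0" "Q + 1 \<noteq> 0" and P: "P \<noteq> 0" and mu: "mu \<noteq> 0"
    and e: "z * (((Q * (inverse P * D / mu) - 0) * (Q + 1) - (Q - 1) * (Q * (inverse P * D / mu) + 0)) / ((Q + 1) * (Q + 1)))
            = M * ((Q - 1) / (Q + 1))"
  shows "z * D = mu * P * M * (Q^2 - 1) / (2 * Q)"
proof -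
  define x where "x = inverse P * D / mu"
  have n: "(Q * x - 0) * (Q + 1) - (Q - 1) * (Q * x + 0) = 2 * Q * x" by (simp add: algebra_simps)
  have "z * (2 * Q * x) / ((Q + 1) * (Q + 1)) = M * ((Q - 1) / (Q + 1))"
    using e unfolding x_def[symmetric] n by simp
  then have "z * (2 * Q * x) = M * ((Q - 1) / (Q + 1)) * ((Q + 1) * (Q + 1))"
    using Q by (simp add: divide_eq_eq)
  also have "\<dots> = M * (Q - 1) * (Q + 1)" using Q by (simp add: field_simps)
  finally have e2: "2 * Q * (z * x) = M * (Q - 1) * (Q + 1)" by (simp add: algebra_simps)
  have zx: "z * x = z * D / (P * mu)" by (simp add: x_def field_simps)
  have "2 * Q * (z * D) = mu * P * M * (Q^2 - 1)"
  proof -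
    have "2 * Q * (z * D) = (2 * Q * (z * x)) * (P * mu)" using P mu by (simp add: zx)
    also have "\<dots> = mu * P * M * (Q^2 - 1)" unfolding e2 by (simp add: power2_eq_square algebra_simps)
    finally show ?thesis .
  qed
  then show ?thesis using Q by (simp add: eq_divide_eq mult.commute mult.left_commute)
qed

theorem lemma3:
  fixes n :: nat and \<mu> :: real and p :: "complex \<Rightarrow> complex"
  assumes "0 < n" and "0 < \<mu>" and "\<mu> \<le> 1"
    and "p \<in> H1 n"
    and "\<forall>z\<in>ball 0 1. \<bar>Arg ((p z)\<^sup>2 + z * deriv p z)\<bar> < phi n \<mu>"
  shows "\<forall>z\<in>ball 0 1. \<bar>Arg (p z)\<bar> < pi / 2 * \<mu>"
proof -
  obtain a where holp: "p holomorphic_on ball 0 1" and a0: "a 0 = 1"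
    and az: "\<forall>k. 0 < k \<and> k < n \<longrightarrow> a k = 0"
    and sm: "\<forall>z\<in>ball 0 1. (\<lambda>k. a k * z ^ k) sums p z"
    using assms(4) unfolding H1_def by blast
  have p0: "p 0 = 1"
    using sm[rule_format, of 0] a0 by simp
  define P where "P z = (if z = 0 then a n else (p z - 1) / z ^ n)" for z
  have Psums: "(\<lambda>k. a (k + n) * z ^ k) sums P z" if "z \<in> ball 0 1" for z
  proof (cases "z = 0")
    case True then show ?thesis by (simp add: P_def)
  next
    case False
    have "(\<lambda>k. a (k + n) * z ^ (k + n)) sums (p z - (\<Sum>k<n. a k * z ^ k))"
      using sums_split_initial_segment[OF sm[rule_format, OF that], of n] by simp
    moreover have "(\<Sum>k<n. a k * z ^ k) = 1"
    proof -
      have "(\<Sum>k<n. a k * z ^ k) = (\<Sum>k\<in>{0}. a k * z ^ k)"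
        using az assms(1) by (intro sum.mono_neutral_right) auto
      then show ?thesis using a0 by simp
    qed
    ultimately have "(\<lambda>k. a (k + n) * z ^ (k + n) / z ^ n) sums ((p z - 1) / z ^ n)"
      by (intro sums_divide) simp
    then show ?thesis using False by (simp add: P_def power_add)
  qed
  have holP: "P holomorphic_on ball 0 1"
    using power_series_holomorphic[of 0 1 "\<lambda>k. a (k+n)" P] Psums by simp
  have pfac: "p z = 1 + z ^ n * P z" if "z \<in> ball 0 1" for z
    using p0 assms(1) by (cases "z = 0") (auto simp: P_def)
  define \<beta> where "\<beta> = pi / 2 * \<mu>"
  have \<beta>: "0 < \<beta>" "\<beta> \<le> pi/2" using assms(2,3) by (auto simp: \<beta>_def)
  have sb: "sin \<beta> > 0" using \<beta> by (intro sin_gt_zero) auto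
  have cb: "cos \<beta> \<ge> 0" using \<beta> by (intro cos_ge_zero) auto
  define G where "G w = sin \<beta> * Re w - \<bar>Im w\<bar> * cos \<beta>" for w
  have goodArg: "G w > 0 \<longleftrightarrow> (w \<noteq> 0 \<and> \<bar>Arg w\<bar> < \<beta>)" for w
  proof (cases "w = 0")
    case True then show ?thesis by (simp add: G_def)
  next
    case False
    then have "G w = norm w * sin (\<beta> - \<bar>Arg w\<bar>)" using arg_good[of w \<beta>] by (simp add: G_def)
    then show ?thesis using False sin_sign(1)[OF \<beta> mpi_less_Arg Arg_le_pi, of w]
      by (simp add: zero_less_mult_iff)
  qed
  have bdArg: "\<bar>Arg w\<bar> = \<beta>" if "w \<noteq> 0" "G w = 0" for w
  proof -
    have "G w = norm w * sin (\<beta> - \<bar>Arg w\<bar>)" using arg_good[of w \<beta>] that by (simp add: G_def)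
    then show ?thesis using that sin_sign(2)[OF \<beta> mpi_less_Arg Arg_le_pi, of w] by simp
  qed
  have Gre: "Re w > 0" if "G w > 0" for w
  proof -
    have "\<bar>Im w\<bar> * cos \<beta> \<ge> 0" using cb by simp
    then have "sin \<beta> * Re w > 0" using that unfolding G_def by linarith
    then show ?thesis using sb by (simp add: zero_less_mult_iff)
  qed
  have contG: "continuous_on UNIV G" unfolding G_def by (intro continuous_intros)
  define Kmin where "Kmin = real n * \<mu> / (1 - \<mu>) * ((1 - \<mu>) / (1 + \<mu>)) powr ((1 + \<mu>) / 2)"
  define Xp where "Xp = cos \<beta> / (sin \<beta> + Kmin)"
  have phiX: "phi n \<mu> = pi / 2 * (\<mu> + 1) - arctan Xp"
  proof -
    have "\<mu> * pi / 2 = \<beta>" by (simp add: \<beta>_def)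
    then show ?thesis unfolding phi_def Xp_def Kmin_def by simp
  qed
  have Kmin0: "0 \<le> Kmin"
    unfolding Kmin_def using assms(2,3) by (intro mult_nonneg_nonneg divide_nonneg_nonneg) auto
  have phi_le: "phi n \<mu> \<le> pi"
  proof -
    have "0 \<le> Xp" unfolding Xp_def using Kmin0 sb cb by simp
    then have "0 \<le> arctan Xp" using arctan_monotone'[of 0 Xp] by simp
    moreover have "pi / 2 * (\<mu> + 1) \<le> pi / 2 * 2" using assms(3) by (intro mult_left_mono) auto
    ultimately show ?thesis unfolding phiX by linarith
  qed
  show ?thesis
  proof (rule ccontr)
    assume "\<not> ?thesis"
    then obtain z1 where z1: "z1 \<in> ball 0 1" "\<not> \<bar>Arg (p z1)\<bar> < \<beta>" by (auto simp: \<beta>_def)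
    then have "\<not> G (p z1) > 0" using goodArg by blast
    define B where "B = cball 0 (norm z1) \<inter> p -` {w. G w \<le> 0}"
    have cbs: "cball 0 (norm z1) \<subseteq> ball 0 1" using z1 by auto
    have "closed B" unfolding B_def
      using holp cbs contG
      by (intro continuous_closed_preimage closed_Collect_le)
         (auto intro: holomorphic_on_imp_continuous_on holomorphic_on_subset continuous_intros)
    moreover have "bounded B" unfolding B_def by (intro bounded_Int) simp
    ultimately have cpt: "compact B" by (simp add: compact_eq_bounded_closed)
    have "z1 \<in> B" using \<open>\<not> G (p z1) > 0\<close> by (simp add: B_def)
    then obtain z0 where z0: "z0 \<in> B" "\<forall>y\<in>B. norm z0 \<le> norm y"
      using continuous_attains_inf[OF cpt _ continuous_on_norm_id] by blast
    define r where "r = norm z0"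
    have z0b: "z0 \<in> ball 0 1" using z0(1) z1(1) by (auto simp: B_def)
    have Gz0: "G (p z0) \<le> 0" using z0(1) by (simp add: B_def)
    have r1: "r \<le> norm z1" using z0(1) by (simp add: B_def r_def)
    have inside: "G (p z) > 0" if "z \<in> ball 0 r" for z
    proof (rule ccontr)
      assume "\<not> G (p z) > 0"
      then have "z \<in> B" using that r1 by (simp add: B_def)
      then show False using z0(2) that by (force simp: r_def)
    qed
    have r0: "r > 0"
    proof (rule ccontr)
      assume "\<not> r > 0"
      then have "z0 = 0" by (simp add: r_def)
      then show False using Gz0 p0 sb by (simp add: G_def)
    qed
    have brU: "ball 0 r \<subseteq> ball 0 1" using r1 z1 by auto
    have Gz0': "G (p z0) \<ge> 0"
    proof -
      have c1: "isCont p z0"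
        using holp z0b continuous_on_eq_continuous_at[of "ball 0 1" p] holomorphic_on_imp_continuous_on by blast
      have c2: "isCont G (p z0)"
        using contG continuous_on_eq_continuous_at[of UNIV G] by blast
      have "isCont (\<lambda>z. G (p z)) z0" using isCont_o2[OF c1 c2] .
      moreover have "((\<lambda>t. of_real t * z0) \<longlongrightarrow> of_real 1 * z0) (at_left (1::real))"
        by (intro tendsto_intros)
      then have "((\<lambda>t. of_real t * z0) \<longlongrightarrow> z0) (at_left (1::real))" by simp
      ultimately have lim: "((\<lambda>t. G (p (of_real t * z0))) \<longlongrightarrow> G (p z0)) (at_left 1)"
        by (rule isCont_tendsto_compose)
      have "\<forall>\<^sub>F t in at_left 1. G (p (of_real t * z0)) \<ge> 0"
      proof -
        have "\<forall>t>0. t < 1 \<longrightarrow> G (p (of_real t * z0)) \<ge> 0"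
        proof (intro allI impI)
          fix t :: real assume "0 < t" "t < 1"
          then have "of_real t * z0 \<in> ball 0 r" using r0 by (simp add: norm_mult r_def)
          then show "G (p (of_real t * z0)) \<ge> 0" using inside less_imp_le by blast
        qed
        then show ?thesis unfolding eventually_at_left_field by (intro exI[of _ 0]) auto
      qed
      then show ?thesis by (rule tendsto_lowerbound[OF lim]) simp
    qed
    have G0: "G (p z0) = 0" using Gz0 Gz0' by simp
    have dp: "(p has_field_derivative deriv p z0) (at z0)"
      using holp z0b by (auto intro: holomorphic_derivI)
    have hyp: "\<bar>Arg ((p z0)\<^sup>2 + z0 * deriv p z0)\<bar> < phi n \<mu>" using assms(5) z0b by blast
    show False
    proof (cases "p z0 = 0")
      case True
      define U where "U = ball 0 1 \<inter> p -` (- {-1})"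
      have openU: "open U" unfolding U_def
        using holp by (intro continuous_open_preimage) (auto intro: holomorphic_on_imp_continuous_on)
      have pne: "1 + p z \<noteq> 0" if "z \<in> U" for z
        using that by (auto simp: U_def add_eq_0_iff)
      have bU: "ball 0 r \<subseteq> U"
      proof
        fix z :: complex assume z: "z \<in> ball 0 r"
        then have "Re (p z) > 0" using inside Gre by blast
        then have "p z \<noteq> -1" by auto
        moreover have "z \<in> ball 0 1" using z brU by blast
        ultimately show "z \<in> U" by (simp add: U_def)
      qed
      have z0U: "z0 \<in> U" using z0b True by (simp add: U_def)
      have UB: "U \<subseteq> ball 0 1" by (auto simp: U_def)
      define v where "v z = (1 - p z) / (1 + p z)" for z
      define hv where "hv z = - P z / (1 + p z)" for z
      have holv: "v holomorphic_on U" unfolding v_def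
        using holp UB pne by (intro holomorphic_intros) (auto intro: holomorphic_on_subset)
      have holhv: "hv holomorphic_on U" unfolding hv_def
        using holp holP UB pne by (intro holomorphic_intros) (auto intro: holomorphic_on_subset)
      have facv: "\<forall>z\<in>U. v z = z ^ n * hv z"
      proof
        fix z assume z: "z \<in> U"
        then have "p z = 1 + z ^ n * P z" using pfac UB by auto
        then show "v z = z ^ n * hv z" using pne[OF z] by (simp add: v_def hv_def field_simps)
      qed
      have ltv: "\<forall>z\<in>ball 0 r. norm (v z) < 1"
      proof
        fix z :: complex assume z: "z \<in> ball 0 r"
        then have "Re (p z) > 0" using inside Gre by blast
        then have "norm (p z - 1) < norm (p z + 1)" by (rule norm_m1_p1(1))
        moreover have "norm (1 - p z) = norm (p z - 1)" by (rule norm_minus_commute)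
        moreover have "norm (1 + p z) = norm (p z + 1)" by (simp add: add.commute)
        moreover have "norm (1 + p z) > 0" using pne[of z] z bU by auto
        ultimately show "norm (v z) < 1"
          unfolding v_def norm_divide by (simp add: divide_less_eq)
      qed
      have eqv: "norm (v z0) = 1" using True by (simp add: v_def)
      have "\<exists>m::real. m \<ge> n \<and> z0 * deriv v z0 = of_real m * v z0"
        by (rule jack[of U r z0 v hv n, OF openU bU z0U r0 _ holv holhv facv ltv eqv]) (simp add: r_def)
      then obtain m :: real where m: "m \<ge> n" "z0 * deriv v z0 = of_real m * v z0" by blast
      have d1: "((\<lambda>z. 1 - p z) has_field_derivative (0 - deriv p z0)) (at z0)"
        using DERIV_diff[OF DERIV_const dp] .
      have d2: "((\<lambda>z. 1 + p z) has_field_derivative (0 + deriv p z0)) (at z0)"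
        using DERIV_add[OF DERIV_const dp] .
      have "(v has_field_derivative (((0 - deriv p z0) * (1 + p z0) - (1 - p z0) * (0 + deriv p z0)) / ((1 + p z0) * (1 + p z0)))) (at z0)"
        unfolding v_def using DERIV_divide[OF d1 d2] True by simp
      then have "deriv v z0 = ((0 - deriv p z0) * (1 + p z0) - (1 - p z0) * (0 + deriv p z0)) / ((1 + p z0) * (1 + p z0))"
        by (rule DERIV_imp_deriv)
      then have "deriv v z0 = - 2 * deriv p z0" using True by simp
      then have e: "- (2 * (z0 * deriv p z0)) = of_real m" using m(2) True by (simp add: v_def algebra_simps)
      then have "2 * (z0 * deriv p z0) = - of_real m" by (metis minus_minus)
      then have e2: "(2 * (z0 * deriv p z0)) / 2 = - of_real m / 2" by simp
      have "z0 * deriv p z0 = (2 * (z0 * deriv p z0)) / 2" by simp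
      also have "\<dots> = - of_real (m / 2)" using e2 by simp
      finally have "z0 * deriv p z0 = - of_real (m / 2)" .
      then have "(p z0)\<^sup>2 + z0 * deriv p z0 = of_real (- (m / 2))" using True by simp
      moreover have "m > 0" using m(1) assms(1) by linarith
      ultimately have "Arg ((p z0)\<^sup>2 + z0 * deriv p z0) = pi" by (simp del: of_real_minus)
      then show False using hyp phi_le by simp

    next
      case False
      have aB: "\<bar>Arg (p z0)\<bar> = \<beta>" using bdArg[OF False G0] .
      define \<rho> where "\<rho> = norm (p z0)"
      have \<rho>: "\<rho> > 0" using False by (simp add: \<rho>_def)
      define q where "q z = exp (Ln (p z) / of_real \<mu>)" for z
      define V where "V = ball 0 1 \<inter> p -` (- \<real>\<^sub>\<le>\<^sub>0)"
      have openV: "open V" unfolding V_def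
        using holp by (intro continuous_open_preimage) (auto intro: holomorphic_on_imp_continuous_on)
      have VB: "V \<subseteq> ball 0 1" by (auto simp: V_def)
      have pV: "p z \<notin> \<real>\<^sub>\<le>\<^sub>0" if "z \<in> V" for z using that by (auto simp: V_def)
      have holpV: "p holomorphic_on V" using holp VB by (rule holomorphic_on_subset)
      have holq: "q holomorphic_on V" unfolding q_def
        using holpV pV by (intro holomorphic_intros) auto
      define U where "U = V \<inter> q -` (- {-1})"
      have openU: "open U" unfolding U_def
        using holq openV by (intro continuous_open_preimage) (auto intro: holomorphic_on_imp_continuous_on)
      have UV: "U \<subseteq> V" by (auto simp: U_def)
      have qne: "q z + 1 \<noteq> 0" if "z \<in> U" for z
      proof
        assume "q z + 1 = 0"
        then have "q z = -1" by (simp add: add_eq_0_iff2)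
        then show False using that by (simp add: U_def)
      qed
      have Req: "Re (q z) = exp (ln (norm (p z)) / \<mu>) * cos (Arg (p z) / \<mu>)" if "p z \<noteq> 0" for z
        using that by (simp add: q_def Re_exp Arg_eq_Im_Ln Re_divide_of_real Im_divide_of_real)
      have qpos: "Re (q z) > 0" and zU: "z \<in> U" if z: "z \<in> ball 0 r" for z
      proof -
        have g: "G (p z) > 0" using inside z by blast
        then have nz: "p z \<noteq> 0" and ar: "\<bar>Arg (p z)\<bar> < \<beta>" using goodArg by auto
        have "\<bar>Arg (p z) / \<mu>\<bar> < pi / 2" using ar assms(2) by (simp add: \<beta>_def abs_divide divide_less_eq)
        then have "Arg (p z) / \<mu> < pi / 2 \<and> - (Arg (p z) / \<mu>) < pi / 2" by (rule abs_less_iff[THEN iffD1])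
        then have "cos (Arg (p z) / \<mu>) > 0" by (intro cos_gt_zero_pi) linarith+
        then show qp: "Re (q z) > 0" using Req[OF nz] by simp
        have "Re (p z) > 0" using Gre g by blast
        then have "p z \<notin> \<real>\<^sub>\<le>\<^sub>0" by (auto simp: complex_nonpos_Reals_iff)
        moreover have "z \<in> ball 0 1" using z brU by blast
        ultimately have "z \<in> V" by (simp add: V_def)
        moreover have "q z \<noteq> -1" using qp by auto
        ultimately show "z \<in> U" by (simp add: U_def)
      qed
      have bU: "ball 0 r \<subseteq> U" using zU by blast
      have pz0V: "p z0 \<notin> \<real>\<^sub>\<le>\<^sub>0"
      proof
        assume "p z0 \<in> \<real>\<^sub>\<le>\<^sub>0"
        then have r1: "Re (p z0) \<le> 0" "Im (p z0) = 0" by (auto simp: complex_nonpos_Reals_iff)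
        then have "Re (p z0) \<noteq> 0" using False by (auto simp: complex_eq_iff)
        then have "Arg (p z0) = pi" using r1 by (auto simp: Arg_eq_pi)
        then show False using aB \<beta> by simp
      qed
      have cos0: "cos (Arg (p z0) / \<mu>) = 0"
      proof -
        have "\<bar>Arg (p z0) / \<mu>\<bar> = pi / 2" using aB assms(2) by (simp add: \<beta>_def abs_divide)
        then have "cos \<bar>Arg (p z0) / \<mu>\<bar> = 0" by (simp only: cos_pi_half)
        moreover have "cos \<bar>x\<bar> = cos x" for x :: real by (simp add: abs_if)
        ultimately show ?thesis by metis
      qed
      have Rq0: "Re (q z0) = 0" using Req[OF False] cos0 by simp
      have z0V: "z0 \<in> V" using z0b pz0V by (simp add: V_def)
      have z0U: "z0 \<in> U" using z0V Rq0 by (auto simp: U_def)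
      define E where "E \<zeta> = exp (Ln \<zeta> / of_real \<mu>)" for \<zeta>
      define W where "W = - (\<real>\<^sub>\<le>\<^sub>0 :: complex set)"
      have openW: "open W" by (simp add: W_def open_Compl)
      have holE: "E holomorphic_on W" unfolding E_def W_def by (intro holomorphic_intros) auto
      have oneW: "1 \<in> W" by (simp add: W_def complex_nonpos_Reals_iff)
      define K where "K = (\<lambda>\<zeta>. if \<zeta> = 1 then deriv E 1 else (E \<zeta> - E 1) / (\<zeta> - 1))"
      have holK: "K holomorphic_on W" unfolding K_def
        using pole_lemma[OF holE, of 1] openW oneW by (simp add: interior_open)
      have E1: "E 1 = 1" by (simp add: E_def)
      have EK: "E \<zeta> - 1 = (\<zeta> - 1) * K \<zeta>" for \<zeta> by (cases "\<zeta> = 1") (auto simp: K_def E1)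
      have qE: "q z = E (p z)" for z by (simp add: q_def E_def)
      define w where "w z = (q z - 1) / (q z + 1)" for z
      define hw where "hw z = P z * K (p z) / (q z + 1)" for z
      have holw: "w holomorphic_on U" unfolding w_def
        using holq UV qne by (intro holomorphic_intros) (auto intro: holomorphic_on_subset)
      have holKp: "(\<lambda>z. K (p z)) holomorphic_on U"
      proof -
        have "(K \<circ> p) holomorphic_on U"
          using holomorphic_on_compose_gen[of p U K W] holpV UV pV holK
          by (auto simp: W_def intro: holomorphic_on_subset)
        then show ?thesis by (simp add: o_def)
      qed
      have holhw: "hw holomorphic_on U" unfolding hw_def
        using holP holKp holq UV VB qne by (intro holomorphic_intros) (auto intro: holomorphic_on_subset)
      have facw: "\<forall>z\<in>U. w z = z ^ n * hw z"
      proof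
        fix z assume z: "z \<in> U"
        have "q z - 1 = (p z - 1) * K (p z)" using EK qE by simp
        also have "p z - 1 = z^n * P z" using pfac z UV VB by auto
        finally show "w z = z ^ n * hw z" using qne[OF z] by (simp add: w_def hw_def)
      qed
      have ltw: "\<forall>z\<in>ball 0 r. norm (w z) < 1"
      proof
        fix z :: complex assume z: "z \<in> ball 0 r"
        have "norm (q z - 1) < norm (q z + 1)" using norm_m1_p1(1)[OF qpos[OF z]] .
        moreover have "norm (q z + 1) > 0" using qne[OF zU[OF z]] by simp
        ultimately show "norm (w z) < 1" unfolding w_def norm_divide by (simp add: divide_less_eq)
      qed
      have eqw: "norm (w z0) = 1"
      proof -
        have "norm (q z0 - 1) = norm (q z0 + 1)" using norm_m1_p1(2)[OF Rq0] .
        moreover have "norm (q z0 + 1) > 0" using qne[OF z0U] by simp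
        ultimately show ?thesis unfolding w_def norm_divide by simp
      qed
      have "\<exists>m::real. m \<ge> n \<and> z0 * deriv w z0 = of_real m * w z0"
        by (rule jack[of U r z0 w hw n, OF openU bU z0U r0 _ holw holhw facw ltw eqw]) (simp add: r_def)
      then obtain m :: real where m: "m \<ge> n" "z0 * deriv w z0 = of_real m * w z0" by blast
      have dL: "((\<lambda>z. Ln (p z)) has_field_derivative inverse (p z0) * deriv p z0) (at z0)"
        using DERIV_chain2[OF has_field_derivative_Ln[OF pz0V] dp] .
      have dL2: "((\<lambda>z. Ln (p z) / of_real \<mu>) has_field_derivative inverse (p z0) * deriv p z0 / of_real \<mu>) (at z0)"
        using DERIV_cdivide[OF dL] .
      define q' where "q' = q z0 * (inverse (p z0) * deriv p z0 / of_real \<mu>)"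
      have dq: "(q has_field_derivative q') (at z0)"
        unfolding q_def q'_def using DERIV_chain2[OF DERIV_exp dL2] .
      have "(w has_field_derivative (((q' - 0) * (q z0 + 1) - (q z0 - 1) * (q' + 0)) / ((q z0 + 1) * (q z0 + 1)))) (at z0)"
        unfolding w_def using DERIV_divide[OF DERIV_diff[OF dq DERIV_const] DERIV_add[OF dq DERIV_const]] qne[OF z0U] by simp
      then have dw: "deriv w z0 = (((q' - 0) * (q z0 + 1) - (q z0 - 1) * (q' + 0)) / ((q z0 + 1) * (q z0 + 1)))"
        by (rule DERIV_imp_deriv)
      have Qnz: "q z0 \<noteq> 0" by (simp add: q_def)
      have mu0: "(of_real \<mu> :: complex) \<noteq> 0" using assms(2) by simp
      have zp: "z0 * deriv p z0 = of_real \<mu> * p z0 * of_real m * ((q z0)^2 - 1) / (2 * q z0)"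
      proof -
        have e: "z0 * deriv w z0 = of_real m * ((q z0 - 1) / (q z0 + 1))" using m(2) by (simp add: w_def)
        have Q1: "q z0 + 1 \<noteq> 0" using qne[OF z0U] .
        show ?thesis by (rule alg[OF Qnz Q1 False mu0 e[unfolded dw q'_def]])
      qed
      define \<sigma> where "\<sigma> = Arg (p z0) / \<beta>"
      have \<sigma>: "\<sigma> = 1 \<or> \<sigma> = -1" using aB \<beta> by (auto simp: \<sigma>_def abs_if)
      have argp: "Arg (p z0) = \<sigma> * \<beta>" using \<beta> by (simp add: \<sigma>_def)
      define A where "A = exp (ln \<rho> / \<mu>)"
      have A: "A > 0" by (simp add: A_def)
      have P0: "p z0 = of_real \<rho> * exp (\<i> * of_real (\<sigma> * \<beta>))"
        using Arg_eq[OF False] argp by (simp add: \<rho>_def)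
      have Q0: "q z0 = \<i> * of_real (\<sigma> * A)"
      proof (rule complex_eqI)
        show "Re (q z0) = Re (\<i> * of_real (\<sigma> * A))" using Rq0 by simp
        have a2: "Im (Ln (p z0)) / \<mu> = \<sigma> * (pi / 2)"
          using argp Arg_eq_Im_Ln[OF False] assms(2) by (simp add: \<beta>_def)
        have s2: "sin (Im (Ln (p z0)) / \<mu>) = \<sigma>" unfolding a2 using \<sigma> by auto
        show "Im (q z0) = Im (\<i> * of_real (\<sigma> * A))"
          using False s2 by (simp add: q_def Im_exp Re_divide_of_real Im_divide_of_real A_def \<rho>_def)
      qed
      have m0: "m \<ge> 0" using m(1) by simp
      have Targ: "\<bar>Arg ((p z0)\<^sup>2 + z0 * deriv p z0)\<bar> = \<beta> + pi/2 - arctan (\<rho> * cos \<beta> / (\<rho> * sin \<beta> + \<mu> * m * (A^2 + 1) / (2 * A)))"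
        unfolding zp by (rule final_T[OF \<sigma> \<rho> A m0 assms(2) \<beta> P0 Q0])
      have rA: "\<rho> = A powr \<mu>"
        using A \<rho> assms(2) by (simp add: powr_def A_def)
      have kl: "\<rho> * Kmin \<le> \<mu> * m * (A^2 + 1) / (2 * A)"
        unfolding Kmin_def by (rule kmin_le[OF assms(2,3) A m(1) rA])
      have Kp0: "0 \<le> \<mu> * m * (A^2 + 1) / (2 * A)" using assms(2) m0 A by simp
      have "\<rho> * cos \<beta> / (\<rho> * sin \<beta> + \<mu> * m * (A^2 + 1) / (2 * A)) \<le> Xp"
        unfolding Xp_def by (rule ratio_le[OF cb sb Kmin0 \<rho> Kp0 kl])
      then have "arctan (\<rho> * cos \<beta> / (\<rho> * sin \<beta> + \<mu> * m * (A^2 + 1) / (2 * A))) \<le> arctan Xp"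
        by (rule arctan_monotone')
      then have "phi n \<mu> \<le> \<bar>Arg ((p z0)\<^sup>2 + z0 * deriv p z0)\<bar>"
      proof -
        have "pi / 2 * (\<mu> + 1) = \<beta> + pi / 2" by (simp add: \<beta>_def algebra_simps)
        then show ?thesis unfolding Targ phiX using \<open>arctan _ \<le> arctan Xp\<close> by linarith
      qed
      then show False using hyp by simp
    qed
  qed
qed

end
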